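(* Let $G=(V,E)$ be an undirected graph, $a,b\in[0,1]$, $(w_i)_{i\ge 0}$ a non-negative weight sequence with $\sum_{i\ge0}w_i=1$ and partial sums $Y_i=\sum_{k\ge i}w_k$, let $\vec{x}\in\mathbb{R}^n$ be non-negative with $\|\vec{x}\|_1\le 1$, and let $\varepsilon>0$ and $L\ge 1$ be such that $Y_i>0$ for $0\le i\le L$. Run the Randomized Propagation Algorithm (described in the context) with these inputs. Then for every node $v\in V$ and every $\ell\in\{0,1,\dots,L\}$ the computed estimators satisfy $\mathrm{E}[\hat{\vec{r}}^{(\ell)}(v)]=\vec{r}^{(\ell)}(v)$ and $\mathrm{E}[\hat{\vec{q}}^{(\ell)}(v)]=\vec{q}^{(\ell)}(v)$, where $\vec{r}^{(\ell)}=Y_\ell\,(\mathbf{D}^{-a}\mathbf{A}\mathbf{D}^{-b})^\ell\vec{x}$ and $\vec{q}^{(\ell)}=w_\ell\,(\mathbf{D}^{-a}\mathbf{A}\mathbf{D}^{-b})^\ell\vec{x}$.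
   Context: $G=(V,E)$ has $n$ nodes; $\mathbf{A}$ is its adjacency matrix, $N_u$ the neighbor set and $d_u$ the degree of node $u$, and $\mathbf{D}$ the diagonal degree matrix. Randomized Propagation Algorithm (inputs $G,\vec{x},(w_i),\varepsilon,L$): set $\hat{\vec{r}}^{(0)}=\vec{x}$ and all other vectors to $0$. For $i=0,\dots,L-1$: for each $u\in V$ with $\hat{\vec{r}}^{(i)}(u)\neq 0$ and each neighbor $v\in N_u$, let $c=\frac{Y_{i+1}}{Y_i}\cdot\frac{\hat{\vec{r}}^{(i)}(u)}{d_v^a d_u^b}$; if $c\ge\varepsilon$, add $c$ to $\hat{\vec{r}}^{(i+1)}(v)$; otherwise, with probability $c/\varepsilon$ (independently of all other random choices) add $\varepsilon$ to $\hat{\vec{r}}^{(i+1)}(v)$; then set $\hat{\vec{q}}^{(i)}(u)=\frac{w_i}{Y_i}\hat{\vec{r}}^{(i)}(u)$. Finally set $\hat{\vec{q}}^{(L)}=\frac{w_L}{Y_L}\hat{\vec{r}}^{(L)}$ and output $\hat{\vec{\pi}}=\sum_{i=0}^{L}\hat{\vec{q}}^{(i)}$. *)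

theory Defs
  imports "HOL-Probability.Probability"
begin

definition ugraph :: "'v set \<Rightarrow> ('v \<Rightarrow> 'v \<Rightarrow> bool) \<Rightarrow> bool" where
  "ugraph V E \<longleftrightarrow> finite V \<and> (\<forall>u v. E u v \<longrightarrow> u \<in> V \<and> v \<in> V) \<and> (\<forall>u v. E u v \<longrightarrow> E v u)"

definition nbrs :: "'v set \<Rightarrow> ('v \<Rightarrow> 'v \<Rightarrow> bool) \<Rightarrow> 'v \<Rightarrow> 'v set" where
  "nbrs V E u = {v \<in> V. E u v}"

definition deg :: "'v set \<Rightarrow> ('v \<Rightarrow> 'v \<Rightarrow> bool) \<Rightarrow> 'v \<Rightarrow> real" where
  "deg V E u = real (card (nbrs V E u))"

definition Ytail :: "(nat \<Rightarrow> real) \<Rightarrow> nat \<Rightarrow> real" where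
  "Ytail w i = (\<Sum>k. w (k + i))"

definition Pent :: "'v set \<Rightarrow> ('v \<Rightarrow> 'v \<Rightarrow> bool) \<Rightarrow> real \<Rightarrow> real \<Rightarrow> 'v \<Rightarrow> 'v \<Rightarrow> real" where
  "Pent V E a b v u = (if E v u then 1 / (deg V E v powr a * deg V E u powr b) else 0)"

text \<open>Matrix-vector product with D^{-a} A D^{-b} (vectors indexed by V).\<close>
definition Papply :: "'v set \<Rightarrow> ('v \<Rightarrow> 'v \<Rightarrow> bool) \<Rightarrow> real \<Rightarrow> real \<Rightarrow> ('v \<Rightarrow> real) \<Rightarrow> ('v \<Rightarrow> real)" where
  "Papply V E a b r = (\<lambda>v. \<Sum>u\<in>V. Pent V E a b v u * r u)"

definition rvec :: "'v set \<Rightarrow> ('v \<Rightarrow> 'v \<Rightarrow> bool) \<Rightarrow> real \<Rightarrow> real \<Rightarrow> (nat \<Rightarrow> real) \<Rightarrow> ('v \<Rightarrow> real) \<Rightarrow> nat \<Rightarrow> 'v \<Rightarrow> real" where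
  "rvec V E a b w x l v = Ytail w l * (Papply V E a b ^^ l) x v"

definition qvec :: "'v set \<Rightarrow> ('v \<Rightarrow> 'v \<Rightarrow> bool) \<Rightarrow> real \<Rightarrow> real \<Rightarrow> (nat \<Rightarrow> real) \<Rightarrow> ('v \<Rightarrow> real) \<Rightarrow> nat \<Rightarrow> 'v \<Rightarrow> real" where
  "qvec V E a b w x l v = w l * (Papply V E a b ^^ l) x v"

definition contrib :: "real \<Rightarrow> real \<Rightarrow> real pmf" where
  "contrib eps c = (if c \<ge> eps then return_pmf c
                    else map_pmf (\<lambda>b. if b then eps else 0) (bernoulli_pmf (c / eps)))"

definition active_pairs :: "'v set \<Rightarrow> ('v \<Rightarrow> 'v \<Rightarrow> bool) \<Rightarrow> ('v \<Rightarrow> real) \<Rightarrow> ('v \<times> 'v) set" where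
  "active_pairs V E r = {(u, v). u \<in> V \<and> r u \<noteq> 0 \<and> v \<in> nbrs V E u}"

definition rpa_step :: "'v set \<Rightarrow> ('v \<Rightarrow> 'v \<Rightarrow> bool) \<Rightarrow> real \<Rightarrow> real \<Rightarrow> (nat \<Rightarrow> real) \<Rightarrow> real
    \<Rightarrow> nat \<Rightarrow> ('v \<Rightarrow> real) \<Rightarrow> ('v \<Rightarrow> real) pmf" where
  "rpa_step V E a b w eps i r =
     map_pmf (\<lambda>f v. \<Sum>u\<in>V. if (u, v) \<in> active_pairs V E r then f (u, v) else 0)
       (Pi_pmf (active_pairs V E r) 0
          (\<lambda>(u, v). contrib eps (Ytail w (Suc i) / Ytail w i * r u / (deg V E v powr a * deg V E u powr b))))"

fun rpa_run :: "'v set \<Rightarrow> ('v \<Rightarrow> 'v \<Rightarrow> bool) \<Rightarrow> real \<Rightarrow> real \<Rightarrow> (nat \<Rightarrow> real) \<Rightarrow> real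
    \<Rightarrow> ('v \<Rightarrow> real) \<Rightarrow> nat \<Rightarrow> ('v \<Rightarrow> real) list pmf" where
  "rpa_run V E a b w eps x 0 = return_pmf [x]"
| "rpa_run V E a b w eps x (Suc i) =
     bind_pmf (rpa_run V E a b w eps x i)
       (\<lambda>rs. map_pmf (\<lambda>r'. rs @ [r']) (rpa_step V E a b w eps i (last rs)))"

definition rhat :: "('v \<Rightarrow> real) list \<Rightarrow> nat \<Rightarrow> 'v \<Rightarrow> real" where
  "rhat rs l v = (rs ! l) v"

definition qhat :: "(nat \<Rightarrow> real) \<Rightarrow> ('v \<Rightarrow> real) list \<Rightarrow> nat \<Rightarrow> 'v \<Rightarrow> real" where
  "qhat w rs l v = w l / Ytail w l * (rs ! l) v"

end

theory Submission imports Defs begin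

lemma contrib_exp:
  assumes "0 \<le> c" "eps > 0"
  shows "measure_pmf.expectation (contrib eps c) (\<lambda>y. y) = c"
proof (cases "c \<ge> eps")
  case True thus ?thesis by (simp add: contrib_def)
next
  case False
  have p: "0 \<le> c / eps" "c / eps \<le> 1" using assms False by auto
  show ?thesis using False p assms by (simp add: contrib_def)
qed

lemma contrib_set: "eps > 0 \<Longrightarrow> y \<in> set_pmf (contrib eps c) \<Longrightarrow> 0 \<le> y \<and> y \<in> {c, eps, 0}"
  by (auto simp: contrib_def split: if_splits)

lemma contrib_finite: "finite (set_pmf (contrib eps c))"
  by (rule finite_subset[of _ "{c, eps, 0}"]) (auto simp: contrib_def split: if_splits)

lemma expectation_bind_finite:
  fixes f :: "'b \<Rightarrow> real"
  assumes fin: "finite (set_pmf M)" "\<And>x. x \<in> set_pmf M \<Longrightarrow> finite (set_pmf (N x))"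
  shows "measure_pmf.expectation (bind_pmf M N) f
         = measure_pmf.expectation M (\<lambda>x. measure_pmf.expectation (N x) f)"
proof -
  define A where "A = set_pmf M"
  define B where "B = (\<Union>x\<in>A. set_pmf (N x))"
  have fA: "finite A" and fB: "finite B" using fin by (auto simp: A_def B_def)
  have "measure_pmf.expectation (bind_pmf M N) f = (\<Sum>y\<in>B. f y * pmf (bind_pmf M N) y)"
    by (rule integral_measure_pmf_real[OF fB]) (auto simp: A_def B_def)
  also have "\<dots> = (\<Sum>y\<in>B. f y * (\<Sum>x\<in>A. pmf (N x) y * pmf M x))"
  proof (rule sum.cong[OF refl])
    fix y assume "y \<in> B"
    have "pmf (bind_pmf M N) y = (\<integral>x. pmf (N x) y \<partial>measure_pmf M)" by (rule pmf_bind)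
    also have "\<dots> = (\<Sum>x\<in>A. pmf (N x) y * pmf M x)"
      by (rule integral_measure_pmf_real[OF fA]) (auto simp: A_def)
    finally show "f y * pmf (bind_pmf M N) y = f y * (\<Sum>x\<in>A. pmf (N x) y * pmf M x)" by simp
  qed
  also have "\<dots> = (\<Sum>x\<in>A. (\<Sum>y\<in>B. f y * pmf (N x) y) * pmf M x)"
    unfolding sum_distrib_left sum_distrib_right by (rule sum.swap[THEN trans]) (simp add: mult.assoc)
  also have "\<dots> = (\<Sum>x\<in>A. measure_pmf.expectation (N x) f * pmf M x)"
  proof (rule sum.cong[OF refl])
    fix x assume x: "x \<in> A"
    have "measure_pmf.expectation (N x) f = (\<Sum>y\<in>B. f y * pmf (N x) y)"
      by (rule integral_measure_pmf_real[OF fB]) (use x in \<open>auto simp: B_def\<close>)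
    thus "(\<Sum>y\<in>B. f y * pmf (N x) y) * pmf M x = measure_pmf.expectation (N x) f * pmf M x" by simp
  qed
  also have "\<dots> = measure_pmf.expectation M (\<lambda>x. measure_pmf.expectation (N x) f)"
    by (rule integral_measure_pmf_real[OF fA, symmetric]) (auto simp: A_def)
  finally show ?thesis .
qed


lemma active_finite: "ugraph V E \<Longrightarrow> finite (active_pairs V E r)"
  by (rule finite_subset[of _ "V \<times> V"]) (auto simp: ugraph_def active_pairs_def nbrs_def)

lemma Pi_finite:
  assumes "ugraph V E"
  shows "finite (set_pmf (Pi_pmf (active_pairs V E r) 0 (\<lambda>(u, v). contrib eps (c u v))))"
  using active_finite[OF assms]
  by (subst set_Pi_pmf) (auto intro!: finite_PiE_dflt simp: contrib_finite split: prod.splits)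

lemma step_finite:
  assumes "ugraph V E"
  shows "finite (set_pmf (rpa_step V E a b w eps i r))"
  unfolding rpa_step_def using Pi_finite[OF assms] by simp

lemma step_nonneg:
  assumes "ugraph V E" "eps > 0" "r' \<in> set_pmf (rpa_step V E a b w eps i r)"
  shows "0 \<le> r' v"
proof -
  let ?F = "(\<lambda>(u, v). contrib eps (Ytail w (Suc i) / Ytail w i * r u / (deg V E v powr a * deg V E u powr b)))"
  from assms(3) obtain f where f: "f \<in> set_pmf (Pi_pmf (active_pairs V E r) 0 ?F)"
    and r': "r' = (\<lambda>v. \<Sum>u\<in>V. if (u, v) \<in> active_pairs V E r then f (u, v) else 0)"
    unfolding rpa_step_def by auto
  have "\<And>p. p \<in> active_pairs V E r \<Longrightarrow> f p \<in> set_pmf (?F p)"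
    using f active_finite[OF assms(1)] by (subst (asm) set_Pi_pmf) (auto simp: PiE_dflt_def)
  hence "\<And>p. p \<in> active_pairs V E r \<Longrightarrow> 0 \<le> f p"
    using contrib_set[OF assms(2)] by (fastforce split: prod.splits)
  thus ?thesis unfolding r' by (auto intro!: sum_nonneg)
qed

lemma step_exp:
  assumes G: "ugraph V E" and eps: "eps > 0" and r: "\<And>u. 0 \<le> r u"
    and Y: "0 < Ytail w i" "0 \<le> Ytail w (Suc i)"
  shows "measure_pmf.expectation (rpa_step V E a b w eps i r) (\<lambda>r'. r' v)
         = Ytail w (Suc i) / Ytail w i * Papply V E a b r v"
proof -
  define AP where "AP = active_pairs V E r"
  define c where "c = (\<lambda>u v. Ytail w (Suc i) / Ytail w i * r u / (deg V E v powr a * deg V E u powr b))"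
  define Q where "Q = Pi_pmf AP 0 (\<lambda>(u, v). contrib eps (c u v))"
  have finAP: "finite AP" using active_finite[OF G] by (simp add: AP_def)
  have finQ: "finite (set_pmf Q)" using Pi_finite[OF G] by (simp add: Q_def AP_def)
  have c0: "0 \<le> c u v" for u v using r Y by (simp add: c_def)
  have comp: "measure_pmf.expectation Q (\<lambda>f. f (u, v)) = c u v" if "(u, v) \<in> AP" for u
  proof -
    have "measure_pmf.expectation Q (\<lambda>f. f (u, v))
          = measure_pmf.expectation (map_pmf (\<lambda>f. f (u, v)) Q) (\<lambda>y. y)" by simp
    also have "map_pmf (\<lambda>f. f (u, v)) Q = contrib eps (c u v)"
      unfolding Q_def by (subst Pi_pmf_component[OF finAP]) (use that in simp)
    finally show ?thesis using contrib_exp[OF c0 eps] by simp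
  qed
  have "measure_pmf.expectation (rpa_step V E a b w eps i r) (\<lambda>r'. r' v)
        = measure_pmf.expectation Q (\<lambda>f. \<Sum>u\<in>V. if (u, v) \<in> AP then f (u, v) else 0)"
    unfolding rpa_step_def Q_def AP_def c_def by simp
  also have "\<dots> = (\<Sum>u\<in>V. measure_pmf.expectation Q (\<lambda>f. if (u, v) \<in> AP then f (u, v) else 0))"
    by (subst Bochner_Integration.integral_sum[where f="\<lambda>u (g :: _ \<times> _ \<Rightarrow> real). if (u, v) \<in> AP then g (u, v) else 0"])
       (auto intro: integrable_measure_pmf_finite[OF finQ])
  also have "\<dots> = (\<Sum>u\<in>V. Ytail w (Suc i) / Ytail w i * (Pent V E a b v u * r u))"
  proof (rule sum.cong[OF refl])
    fix u assume u: "u \<in> V"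
    show "measure_pmf.expectation Q (\<lambda>f. if (u, v) \<in> AP then f (u, v) else 0)
          = Ytail w (Suc i) / Ytail w i * (Pent V E a b v u * r u)"
    proof (cases "(u, v) \<in> AP")
      case True
      then have "E v u" using G by (auto simp: AP_def active_pairs_def nbrs_def ugraph_def)
      then show ?thesis using True comp[OF True] by (simp add: c_def Pent_def)
    next
      case False
      then have "r u = 0 \<or> \<not> E v u" using G u
        by (auto simp: AP_def active_pairs_def nbrs_def ugraph_def)
      then show ?thesis using False by (auto simp: Pent_def)
    qed
  qed
  also have "\<dots> = Ytail w (Suc i) / Ytail w i * Papply V E a b r v"
    by (simp add: Papply_def sum_distrib_left)
  finally show ?thesis .
qed

lemma exp_cong_pmf:
  "(\<And>x. x \<in> set_pmf M \<Longrightarrow> f x = g x) \<Longrightarrow> measure_pmf.expectation M f = measure_pmf.expectation M (g :: _ \<Rightarrow> real)"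
  by (rule integral_cong_AE) (auto simp: AE_measure_pmf_iff)

lemma run_main:
  assumes G: "ugraph V E" and eps: "eps > 0" and x: "\<And>v. 0 \<le> x v"
    and Y: "\<And>i. i \<le> L \<Longrightarrow> Ytail w i > 0" and Y0: "Ytail w 0 = 1"
  shows "n \<le> L \<Longrightarrow> finite (set_pmf (rpa_run V E a b w eps x n))
    \<and> (\<forall>rs\<in>set_pmf (rpa_run V E a b w eps x n). length rs = Suc n \<and> (\<forall>k<Suc n. \<forall>v. 0 \<le> (rs!k) v))
    \<and> (\<forall>l\<le>n. \<forall>v. measure_pmf.expectation (rpa_run V E a b w eps x n) (\<lambda>rs. (rs!l) v)
          = Ytail w l * (Papply V E a b ^^ l) x v)"
proof (induction n)
  case 0
  then show ?case using x Y0 by simp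
next
  case (Suc n)
  let ?M = "rpa_run V E a b w eps x n"
  let ?N = "\<lambda>rs. map_pmf (\<lambda>r'. rs @ [r']) (rpa_step V E a b w eps n (last rs))"
  from Suc have IH: "finite (set_pmf ?M)"
    "\<And>rs. rs \<in> set_pmf ?M \<Longrightarrow> length rs = Suc n \<and> (\<forall>k<Suc n. \<forall>v. 0 \<le> (rs!k) v)"
    "\<And>l v. l \<le> n \<Longrightarrow> measure_pmf.expectation ?M (\<lambda>rs. (rs!l) v) = Ytail w l * (Papply V E a b ^^ l) x v"
    by auto
  have Yn: "0 < Ytail w n" "0 < Ytail w (Suc n)" using Y Suc.prems by auto
  have finN: "\<And>rs. finite (set_pmf (?N rs))" using step_finite[OF G] by simp
  have run: "rpa_run V E a b w eps x (Suc n) = bind_pmf ?M ?N" by simp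
  have fin: "finite (set_pmf (rpa_run V E a b w eps x (Suc n)))"
    unfolding run using IH(1) finN by simp
  have supp: "\<forall>rs\<in>set_pmf (rpa_run V E a b w eps x (Suc n)). length rs = Suc (Suc n) \<and> (\<forall>k<Suc (Suc n). \<forall>v. 0 \<le> (rs!k) v)"
  proof
    fix rs' assume "rs' \<in> set_pmf (rpa_run V E a b w eps x (Suc n))"
    then obtain rs r' where rs: "rs \<in> set_pmf ?M" and r': "r' \<in> set_pmf (rpa_step V E a b w eps n (last rs))"
      and rs': "rs' = rs @ [r']" unfolding run by auto
    have "0 \<le> r' v" for v by (rule step_nonneg[OF G eps r'])
    then show "length rs' = Suc (Suc n) \<and> (\<forall>k<Suc (Suc n). \<forall>v. 0 \<le> (rs'!k) v)"
      using IH(2)[OF rs] unfolding rs' by (auto simp: nth_append less_Suc_eq)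
  qed
  have ex: "measure_pmf.expectation (rpa_run V E a b w eps x (Suc n)) (\<lambda>rs. (rs!l) v)
          = Ytail w l * (Papply V E a b ^^ l) x v" if l: "l \<le> Suc n" for l v
  proof -
    have "measure_pmf.expectation (rpa_run V E a b w eps x (Suc n)) (\<lambda>rs. (rs!l) v)
       = measure_pmf.expectation ?M (\<lambda>rs. measure_pmf.expectation (?N rs) (\<lambda>rs. (rs!l) v))"
      unfolding run by (rule expectation_bind_finite[OF IH(1) finN])
    also have "\<dots> = measure_pmf.expectation ?M (\<lambda>rs. measure_pmf.expectation (rpa_step V E a b w eps n (last rs)) (\<lambda>r'. ((rs @ [r'])!l) v))"
      by simp
    finally have eq: "measure_pmf.expectation (rpa_run V E a b w eps x (Suc n)) (\<lambda>rs. (rs!l) v) =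
       measure_pmf.expectation ?M (\<lambda>rs. measure_pmf.expectation (rpa_step V E a b w eps n (last rs)) (\<lambda>r'. ((rs @ [r'])!l) v))" .
    show ?thesis
    proof (cases "l \<le> n")
      case True
      have "measure_pmf.expectation ?M (\<lambda>rs. measure_pmf.expectation (rpa_step V E a b w eps n (last rs)) (\<lambda>r'. ((rs @ [r'])!l) v))
          = measure_pmf.expectation ?M (\<lambda>rs. (rs!l) v)"
        by (rule exp_cong_pmf) (use IH(2) True in \<open>simp add: nth_append\<close>)
      then show ?thesis using eq IH(3)[OF True] by simp
    next
      case False
      then have l': "l = Suc n" using l by simp
      define c where "c = Ytail w (Suc n) / Ytail w n"
      have "measure_pmf.expectation ?M (\<lambda>rs. measure_pmf.expectation (rpa_step V E a b w eps n (last rs)) (\<lambda>r'. ((rs @ [r'])!l) v))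
          = measure_pmf.expectation ?M (\<lambda>rs. \<Sum>u\<in>V. c * Pent V E a b v u * (rs!n) u)"
      proof (rule exp_cong_pmf)
        fix rs assume rs: "rs \<in> set_pmf ?M"
        have len: "length rs = Suc n" and nn: "\<And>u. 0 \<le> (rs!n) u" using IH(2)[OF rs] by auto
        have "rs \<noteq> []" using len by auto
        hence last: "last rs = rs ! n" using len by (simp add: last_conv_nth)
        have "measure_pmf.expectation (rpa_step V E a b w eps n (last rs)) (\<lambda>r'. ((rs @ [r'])!l) v)
            = measure_pmf.expectation (rpa_step V E a b w eps n (last rs)) (\<lambda>r'. r' v)"
          using len l' by (simp add: nth_append)
        also have "\<dots> = c * Papply V E a b (rs ! n) v"
          unfolding last c_def by (rule step_exp[OF G eps nn Yn(1) less_imp_le[OF Yn(2)]])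
        finally show "measure_pmf.expectation (rpa_step V E a b w eps n (last rs)) (\<lambda>r'. ((rs @ [r'])!l) v)
            = (\<Sum>u\<in>V. c * Pent V E a b v u * (rs!n) u)"
          by (simp add: Papply_def sum_distrib_left mult.assoc)
      qed
      also have "\<dots> = (\<Sum>u\<in>V. c * Pent V E a b v u * measure_pmf.expectation ?M (\<lambda>rs. (rs!n) u))"
        by (subst Bochner_Integration.integral_sum[where f="\<lambda>u rs. c * Pent V E a b v u * (rs!n) u"])
           (auto intro: integrable_measure_pmf_finite[OF IH(1)])
      also have "\<dots> = (\<Sum>u\<in>V. c * Pent V E a b v u * (Ytail w n * (Papply V E a b ^^ n) x u))"
        using IH(3) by simp
      also have "\<dots> = Ytail w (Suc n) * (Papply V E a b ^^ Suc n) x v"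
        using Yn by (simp add: c_def Papply_def sum_distrib_left)
      finally show ?thesis using eq l' by simp
    qed
  qed
  show ?case using fin supp ex by blast
qed

theorem lemma4p1:
  fixes V :: "'v set" and E :: "'v \<Rightarrow> 'v \<Rightarrow> bool"
    and a b eps :: real and w :: "nat \<Rightarrow> real" and x :: "'v \<Rightarrow> real" and L :: nat
  assumes "ugraph V E"
    and "0 \<le> a" "a \<le> 1" "0 \<le> b" "b \<le> 1"
    and "\<And>i. 0 \<le> w i" "w sums 1"
    and "\<And>v. 0 \<le> x v" "\<And>v. v \<notin> V \<Longrightarrow> x v = 0" "(\<Sum>v\<in>V. x v) \<le> 1"
    and "eps > 0" "L \<ge> 1"
    and "\<And>i. i \<le> L \<Longrightarrow> Ytail w i > 0"
  shows "\<forall>v\<in>V. \<forall>l\<le>L.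
      measure_pmf.expectation (rpa_run V E a b w eps x L) (\<lambda>rs. rhat rs l v) = rvec V E a b w x l v
    \<and> measure_pmf.expectation (rpa_run V E a b w eps x L) (\<lambda>rs. qhat w rs l v) = qvec V E a b w x l v"
proof (intro ballI allI impI)
  fix v l assume v: "v \<in> V" and l: "l \<le> L"
  have Y0: "Ytail w 0 = 1" unfolding Ytail_def using sums_unique[OF assms(7)] by simp
  have main: "\<And>l v. l \<le> L \<Longrightarrow> measure_pmf.expectation (rpa_run V E a b w eps x L) (\<lambda>rs. (rs!l) v)
          = Ytail w l * (Papply V E a b ^^ l) x v"
  proof -
    fix l v assume "l \<le> L"
    have "L \<le> L" by simp
    from run_main[of V E eps x L w L a b, OF assms(1) assms(11) assms(8) assms(13) Y0 this] \<open>l \<le> L\<close>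
    show "measure_pmf.expectation (rpa_run V E a b w eps x L) (\<lambda>rs. (rs!l) v)
          = Ytail w l * (Papply V E a b ^^ l) x v" by blast
  qed
  have r: "measure_pmf.expectation (rpa_run V E a b w eps x L) (\<lambda>rs. rhat rs l v) = rvec V E a b w x l v"
    unfolding rhat_def rvec_def using main[OF l] by simp
  have Yl: "Ytail w l \<noteq> 0" using assms(13)[OF l] by simp
  have "measure_pmf.expectation (rpa_run V E a b w eps x L) (\<lambda>rs. qhat w rs l v)
      = w l / Ytail w l * measure_pmf.expectation (rpa_run V E a b w eps x L) (\<lambda>rs. (rs!l) v)"
    unfolding qhat_def by (rule integral_mult_right_zero)
  also have "\<dots> = w l / Ytail w l * (Ytail w l * (Papply V E a b ^^ l) x v)"
    using main[OF l] by simp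
  also have "\<dots> = qvec V E a b w x l v"
    using Yl unfolding qvec_def by simp
  finally have "measure_pmf.expectation (rpa_run V E a b w eps x L) (\<lambda>rs. qhat w rs l v) = qvec V E a b w x l v" .
  moreover note r
  ultimately show "measure_pmf.expectation (rpa_run V E a b w eps x L) (\<lambda>rs. rhat rs l v) = rvec V E a b w x l v
    \<and> measure_pmf.expectation (rpa_run V E a b w eps x L) (\<lambda>rs. qhat w rs l v) = qvec V E a b w x l v" by blast
qed

end
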